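(* In the setting below, let $(x^{(k)},z^{(k)})$ be generated by the Bregman PD3O algorithm \[x^{(k+1)}=\mathrm{prox}^{\phi_{\mathrm p}}_{\tau f}\big(x^{(k)},\tau A^Tz^{(k)}+\tau\nabla h(x^{(k)})\big),\] \[z^{(k+1)}=\mathrm{prox}^{\phi_{\mathrm d}}_{\sigma g^*}\Big(z^{(k)},-\sigma A\big(2x^{(k+1)}-x^{(k)}+\tau(\nabla h(x^{(k)})-\nabla h(x^{(k+1)}))\big)\Big),\] with $x^{(0)}\in\operatorname{int}(\operatorname{dom}\phi_{\mathrm p})$, $z^{(0)}\in\operatorname{int}(\operatorname{dom}\phi_{\mathrm d})$, and let $x^{(k)}_{\mathrm{avg}}=\frac1k\sum_{i=1}^kx^{(i)}$, $z^{(k)}_{\mathrm{avg}}=\frac1k\sum_{i=1}^kz^{(i)}$. Then for all $k\ge1$, all $x\in\operatorname{dom}f\cap\operatorname{dom}\phi_{\mathrm p}$ and all $z\in\operatorname{dom}g^*\cap\operatorname{dom}\phi_{\mathrm d}$, \[\mathcal L(x^{(k)}_{\mathrm{avg}},z)-\mathcal L(x,z^{(k)}_{\mathrm{avg}})\le\frac3k\Big(\frac2\tau d_{\mathrm p}(x,x^{(0)})+\frac1\sigma d_{\mathrm d}(z,z^{(0)})\Big).\]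
   Context: Setting: $f:\mathbb R^n\to\mathbb R\cup\{+\infty\}$ and $g:\mathbb R^m\to\mathbb R\cup\{+\infty\}$ closed convex, $g$ and $f+h$ proper, $A\in\mathbb R^{m\times n}$, $g^*$ the conjugate of $g$. $h:\mathbb R^n\to\mathbb R$ is convex and differentiable with $h(y)-h(x)-\langle\nabla h(x),y-x\rangle\le\frac L2\|y-x\|^2$ for all $x,y$ (Euclidean norm), $L>0$. Lagrangian $\mathcal L(x,z)=f(x)+h(x)+\langle z,Ax\rangle-g^*(z)$ (value $+\infty$ if $x\notin\operatorname{dom}f$, $-\infty$ if $x\in\operatorname{dom}f$, $z\notin\operatorname{dom}g^*$). A Bregman kernel $\phi$ is convex with $\operatorname{int}(\operatorname{dom}\phi)\ne\emptyset$, continuous on $\operatorname{dom}\phi$, continuously differentiable on the interior; distance $d(x,y)=\phi(x)-\phi(y)-\langle\nabla\phi(y),x-y\rangle$ on $\operatorname{dom}\phi\times\operatorname{int}(\operatorname{dom}\phi)$; $\mathrm{prox}^\phi_F(y,a)=\operatorname{argmin}_x\big(F(x)+\langle a,x\rangle+d(x,y)\big)$, assumed to be a unique point of $\operatorname{int}(\operatorname{dom}\phi)$ for all $a$ and $y\in\operatorname{int}(\operatorname{dom}\phi)$. Kernels $\phi_{\mathrm p}$ (on $\mathbb R^n$), $\phi_{\mathrm d}$ (on $\mathbb R^m$) have distances with $d_{\mathrm p}(x,x')\ge\frac12\|x-x'\|^2$ and $d_{\mathrm d}(z,z')\ge\frac12\|z-z'\|_{\mathrm d}^2$ for a norm $\|\cdot\|_{\mathrm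 d}$. $\|A\|=\sup_{v\ne0}\|Av\|_{\mathrm d,*}/\|v\|$ with $\|\cdot\|_{\mathrm d,*}$ the dual norm. Stepsizes $\sigma,\tau>0$ satisfy $\sigma\tau\|A\|^2\le1$ and $\tau\le1/L$. The optimality conditions $0\in\partial f(x)+\nabla h(x)+A^Tz$, $0\in\partial g^*(z)-Ax$ have a solution in $\operatorname{dom}\phi_{\mathrm p}\times\operatorname{dom}\phi_{\mathrm d}$. *)

theory Defs
  imports "HOL-Analysis.Analysis" "HOL-Library.Extended_Real"
begin

definition edom :: "('a \<Rightarrow> ereal) \<Rightarrow> 'a set" where
  "edom f = {x. f x < \<infinity>}"

definition epigraph :: "('a \<Rightarrow> ereal) \<Rightarrow> ('a \<times> real) set" where
  "epigraph f = {(x, t). f x \<le> ereal t}"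

definition econvex :: "('a::real_vector \<Rightarrow> ereal) \<Rightarrow> bool" where
  "econvex f \<longleftrightarrow> convex (epigraph f)"

definition eclosed :: "('a::topological_space \<Rightarrow> ereal) \<Rightarrow> bool" where
  "eclosed f \<longleftrightarrow> closed (epigraph f)"

definition eproper :: "('a \<Rightarrow> ereal) \<Rightarrow> bool" where
  "eproper f \<longleftrightarrow> (\<forall>x. f x \<noteq> -\<infinity>) \<and> (\<exists>x. f x < \<infinity>)"

definition conjugate :: "('a::real_inner \<Rightarrow> ereal) \<Rightarrow> 'a \<Rightarrow> ereal" where
  "conjugate g z = (SUP x. ereal (z \<bullet> x) - g x)"

definition subdiff :: "('a::real_inner \<Rightarrow> ereal) \<Rightarrow> 'a \<Rightarrow> 'a set" where
  "subdiff f x = {s. f x \<noteq> \<infinity> \<and> (\<forall>y. f x + ereal (s \<bullet> (y - x)) \<le> f y)}"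

definition is_norm :: "('a::real_vector \<Rightarrow> real) \<Rightarrow> bool" where
  "is_norm N \<longleftrightarrow> (\<forall>z. N z \<ge> 0) \<and> (\<forall>z. N z = 0 \<longleftrightarrow> z = 0)
     \<and> (\<forall>c z. N (c *\<^sub>R z) = \<bar>c\<bar> * N z) \<and> (\<forall>z w. N (z + w) \<le> N z + N w)"

definition dual_norm :: "('a::real_inner \<Rightarrow> real) \<Rightarrow> 'a \<Rightarrow> real" where
  "dual_norm N w = Sup {w \<bullet> z | z. N z \<le> 1}"

definition op_norm :: "(real^'m \<Rightarrow> real) \<Rightarrow> real^'n^'m \<Rightarrow> real" where
  "op_norm Nd A = Sup {dual_norm Nd (A *v v) / norm v | v. v \<noteq> 0}"

text \<open>A Bregman kernel is represented by its (convex) effective domain D, its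
  (finite) values phi on D and its gradient dphi on the interior of D.\<close>

definition bregman_kernel :: "'a::euclidean_space set \<Rightarrow> ('a \<Rightarrow> real) \<Rightarrow> ('a \<Rightarrow> 'a) \<Rightarrow> bool" where
  "bregman_kernel D phi dphi \<longleftrightarrow> convex D \<and> convex_on D phi \<and> interior D \<noteq> {}
     \<and> continuous_on D phi
     \<and> (\<forall>y\<in>interior D. (phi has_derivative (\<lambda>v. dphi y \<bullet> v)) (at y))
     \<and> continuous_on (interior D) dphi"

definition bdist :: "('a::real_inner \<Rightarrow> real) \<Rightarrow> ('a \<Rightarrow> 'a) \<Rightarrow> 'a \<Rightarrow> 'a \<Rightarrow> real" where
  "bdist phi dphi x y = phi x - phi y - dphi y \<bullet> (x - y)"

definition is_bprox :: "'a::real_inner set \<Rightarrow> ('a \<Rightarrow> real) \<Rightarrow> ('a \<Rightarrow> 'a) \<Rightarrow> ('a \<Rightarrow> ereal)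
    \<Rightarrow> 'a \<Rightarrow> 'a \<Rightarrow> 'a \<Rightarrow> bool" where
  "is_bprox D phi dphi F y a p \<longleftrightarrow> p \<in> D \<and>
     (\<forall>x\<in>D. F p + ereal (a \<bullet> p + bdist phi dphi p y) \<le> F x + ereal (a \<bullet> x + bdist phi dphi x y))"

definition bprox :: "'a::real_inner set \<Rightarrow> ('a \<Rightarrow> real) \<Rightarrow> ('a \<Rightarrow> 'a) \<Rightarrow> ('a \<Rightarrow> ereal)
    \<Rightarrow> 'a \<Rightarrow> 'a \<Rightarrow> 'a" where
  "bprox D phi dphi F y a = (THE p. is_bprox D phi dphi F y a p)"

definition bprox_wellposed :: "'a::real_inner set \<Rightarrow> ('a \<Rightarrow> real) \<Rightarrow> ('a \<Rightarrow> 'a) \<Rightarrow> ('a \<Rightarrow> ereal) \<Rightarrow> bool" where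
  "bprox_wellposed D phi dphi F \<longleftrightarrow> (\<forall>y\<in>interior D. \<forall>a.
     (\<exists>!p. is_bprox D phi dphi F y a p) \<and> (\<forall>p. is_bprox D phi dphi F y a p \<longrightarrow> p \<in> interior D))"

definition lagrangian :: "(real^'n \<Rightarrow> ereal) \<Rightarrow> (real^'n \<Rightarrow> real) \<Rightarrow> (real^'m \<Rightarrow> ereal)
    \<Rightarrow> real^'n^'m \<Rightarrow> real^'n \<Rightarrow> real^'m \<Rightarrow> ereal" where
  "lagrangian f h g A x z =
     (if x \<notin> edom f then \<infinity>
      else if z \<notin> edom (conjugate g) then -\<infinity>
      else f x + ereal (h x + z \<bullet> (A *v x)) - conjugate g z)"

end

theory Submission
  imports Defs
begin


lemma deriv_lb:
  fixes F :: "'a::real_normed_vector \<Rightarrow> real"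
  assumes d: "(F has_derivative F') (at p)"
    and lb: "\<And>t. 0 < t \<Longrightarrow> t < 1 \<Longrightarrow> t * c \<le> F (p + t *\<^sub>R v) - F p"
  shows "c \<le> F' v"
proof -
  have lin: "linear F'" using d has_derivative_linear by blast
  have d1: "((\<lambda>t. p + t *\<^sub>R v) has_derivative (\<lambda>t. t *\<^sub>R v)) (at 0)"
    by (auto intro!: derivative_eq_intros)
  have d2: "((\<lambda>t. F (p + t *\<^sub>R v)) has_derivative (\<lambda>t. F' (t *\<^sub>R v))) (at 0)"
    using has_derivative_compose[OF d1, of F F'] d by simp
  have "(\<lambda>t. F' (t *\<^sub>R v)) = (*) (F' v)"
    using lin by (auto simp: linear_scale mult.commute)
  with d2 have "((\<lambda>t. F (p + t *\<^sub>R v)) has_field_derivative F' v) (at 0)"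
    unfolding has_field_derivative_def by metis
  then have "((\<lambda>t. F (p + t *\<^sub>R v)) has_field_derivative F' v) (at 0 within {0<..})"
    by (rule has_field_derivative_at_within)
  then have lim: "((\<lambda>t. (F (p + t *\<^sub>R v) - F p) / t) \<longlongrightarrow> F' v) (at_right 0)"
    by (simp add: has_field_derivative_iff)
  have ev: "\<forall>\<^sub>F t in at_right (0::real). c \<le> (F (p + t *\<^sub>R v) - F p) / t"
  proof -
    have "\<forall>\<^sub>F t in at_right (0::real). 0 < t \<and> t < 1"
      unfolding eventually_at_right[of 0 "1::real", simplified] by (rule exI[of _ 1]) auto
    then show ?thesis
      by eventually_elim (use lb in \<open>auto simp: pos_le_divide_eq mult.commute\<close>)
  qed
  show ?thesis
    by (rule tendsto_lowerbound[OF lim ev]) simp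
qed



lemma grad_ineq:
  fixes h :: "'a::real_inner \<Rightarrow> real"
  assumes c: "convex_on C h" and x: "x \<in> C" and y: "y \<in> C"
    and d: "(h has_derivative (\<lambda>v. gx \<bullet> v)) (at x)"
  shows "h x + gx \<bullet> (y - x) \<le> h y"
proof -
  have d': "((\<lambda>v. - h v) has_derivative (\<lambda>v. - (gx \<bullet> v))) (at x)"
    using has_derivative_minus[OF d] .
  have "h x - h y \<le> - (gx \<bullet> (y - x))"
  proof (rule deriv_lb[OF d'])
    fix t :: real assume t: "0 < t" "t < 1"
    have eq: "x + t *\<^sub>R (y - x) = (1 - t) *\<^sub>R x + t *\<^sub>R y" by (simp add: algebra_simps)
    have "h ((1 - t) *\<^sub>R x + t *\<^sub>R y) \<le> (1 - t) * h x + t * h y"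
      using convex_onD[OF c, of t x y] t x y by simp
    then show "t * (h x - h y) \<le> - h (x + t *\<^sub>R (y - x)) - - h x"
      unfolding eq by (simp add: algebra_simps)
  qed
  then show ?thesis by simp
qed

lemma bdist_split:
  "bdist phi dphi u y = bdist phi dphi u p + bdist phi dphi p y + (dphi p - dphi y) \<bullet> (u - p)"
  unfolding bdist_def by (simp add: algebra_simps inner_diff_left inner_diff_right)

lemma three_point:
  fixes Fr :: "'a::real_inner \<Rightarrow> real"
  assumes cD: "convex D" and cF: "convex_on C Fr"
    and p: "p \<in> D" "p \<in> C" and u: "u \<in> D" "u \<in> C"
    and dp: "(phi has_derivative (\<lambda>v. dphi p \<bullet> v)) (at p)"
    and mn: "\<And>x. x \<in> D \<Longrightarrow> x \<in> C \<Longrightarrow>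
               Fr p + (a \<bullet> p + bdist phi dphi p y) \<le> Fr x + (a \<bullet> x + bdist phi dphi x y)"
  shows "Fr p + a \<bullet> p + bdist phi dphi p y + bdist phi dphi u p \<le> Fr u + a \<bullet> u + bdist phi dphi u y"
proof -
  define Psi where "Psi v = Fr v + a \<bullet> v + (dphi p - dphi y) \<bullet> (v - p)" for v
  have cC: "convex C" using cF convex_on_def by blast
  have "Psi p - Psi u + dphi p \<bullet> (u - p) \<le> dphi p \<bullet> (u - p)"
  proof (rule deriv_lb[OF dp])
    fix t :: real assume t: "0 < t" "t < 1"
    define ut where "ut = (1 - t) *\<^sub>R p + t *\<^sub>R u"
    have ut_eq: "p + t *\<^sub>R (u - p) = ut" unfolding ut_def by (simp add: algebra_simps)
    have utD: "ut \<in> D" unfolding ut_def using cD p u t by (simp add: convex_def)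
    have utC: "ut \<in> C" unfolding ut_def using cC p u t by (simp add: convex_def)
    have m1: "Fr p + (a \<bullet> p + bdist phi dphi p y) \<le> Fr ut + (a \<bullet> ut + bdist phi dphi ut y)"
      using mn[OF utD utC] .
    have m2: "Psi p \<le> Psi ut + bdist phi dphi ut p"
      using m1 bdist_split[of phi dphi ut y p] unfolding Psi_def by simp
    have m3: "Fr ut \<le> (1 - t) * Fr p + t * Fr u"
      unfolding ut_def using convex_onD[OF cF, of t p u] t p u by simp
    have m4: "Psi ut \<le> (1 - t) * Psi p + t * Psi u"
      using m3 unfolding Psi_def ut_def
      by (simp add: algebra_simps inner_add_right inner_diff_right)
    have m5: "bdist phi dphi ut p = phi (p + t *\<^sub>R (u - p)) - phi p - t * (dphi p \<bullet> (u - p))"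
      unfolding bdist_def ut_eq[symmetric] by simp
    show "t * (Psi p - Psi u + dphi p \<bullet> (u - p)) \<le> phi (p + t *\<^sub>R (u - p)) - phi p"
      using m2 m4 m5 by (simp add: algebra_simps)
  qed
  then have "Psi p \<le> Psi u" by simp
  then show ?thesis
    using bdist_split[of phi dphi u y p] unfolding Psi_def bdist_def by (simp add: algebra_simps)
qed



lemma is_norm_neg: "is_norm N \<Longrightarrow> N (- z) = N z"
  unfolding is_norm_def by (metis abs_minus_cancel abs_one mult_1 scaleR_minus1_left)

lemma is_norm_zero: "is_norm N \<Longrightarrow> N 0 = 0"
  unfolding is_norm_def by metis

lemma is_norm_sum: assumes n: "is_norm N" and fin: "finite S" shows "N (sum f S) \<le> (\<Sum>i\<in>S. N (f i))"
  using fin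
proof (induction S rule: finite_induct)
  case empty then show ?case using n unfolding is_norm_def by (metis order.refl sum.empty)
next
  case (insert x F)
  then show ?case using n unfolding is_norm_def by (smt (verit) sum.insert)
qed

lemma norm_upper:
  fixes N :: "'a::euclidean_space \<Rightarrow> real"
  assumes n: "is_norm N"
  shows "N z \<le> (\<Sum>b\<in>Basis. N b) * norm z"
proof -
  have "N z = N (\<Sum>b\<in>Basis. (z \<bullet> b) *\<^sub>R b)" by (simp add: euclidean_representation)
  also have "\<dots> \<le> (\<Sum>b\<in>Basis. N ((z \<bullet> b) *\<^sub>R b))" by (rule is_norm_sum[OF n]) simp
  also have "\<dots> = (\<Sum>b\<in>Basis. \<bar>z \<bullet> b\<bar> * N b)" using n unfolding is_norm_def by simp
  also have "\<dots> \<le> (\<Sum>b\<in>Basis. norm z * N b)"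
    apply (rule sum_mono) apply (rule mult_right_mono)
    using n unfolding is_norm_def by (auto simp: Basis_le_norm)
  also have "\<dots> = (\<Sum>b\<in>Basis. N b) * norm z" by (simp add: sum_distrib_left mult.commute)
  finally show ?thesis .
qed

lemma norm_lower:
  fixes N :: "'a::euclidean_space \<Rightarrow> real"
  assumes n: "is_norm N"
  shows "\<exists>c>0. \<forall>z. c * norm z \<le> N z"
proof -
  define C where "C = (\<Sum>b\<in>Basis. N b)"
  have C0: "C \<ge> 0" unfolding C_def using n unfolding is_norm_def by (simp add: sum_nonneg)
  have lip: "\<bar>N x - N y\<bar> \<le> C * norm (x - y)" for x y
  proof -
    have "N x \<le> N y + N (x - y)" using n unfolding is_norm_def by (metis add.commute diff_add_cancel)
    moreover have "N y \<le> N x + N (y - x)" using n unfolding is_norm_def by (metis add.commute diff_add_cancel)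
    moreover have "N (y - x) = N (x - y)" using is_norm_neg[OF n, of "x - y"] by simp
    moreover have "N (x - y) \<le> C * norm (x - y)" using norm_upper[OF n] C_def by simp
    ultimately show ?thesis by linarith
  qed
  have cont: "continuous_on UNIV N"
    unfolding continuous_on_iff
  proof (intro ballI allI impI)
    fix x :: 'a and e :: real assume e: "0 < e"
    show "\<exists>d>0. \<forall>x'\<in>UNIV. dist x' x < d \<longrightarrow> dist (N x') (N x) < e"
    proof (intro exI[of _ "e / (C + 1)"] conjI ballI impI)
      show "0 < e / (C + 1)" using e C0 by simp
    next
      fix x' assume "dist x' x < e / (C + 1)"
      then have "(C + 1) * norm (x' - x) < e" using C0 by (simp add: dist_norm field_simps)
      moreover have "\<bar>N x' - N x\<bar> \<le> C * norm (x' - x)" by (rule lip)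
      ultimately show "dist (N x') (N x) < e" using C0 unfolding dist_real_def
        by (smt (verit) mult_nonneg_nonneg norm_ge_zero distrib_right)
    qed
  qed
  obtain b0 :: 'a where b0: "b0 \<in> Basis" using nonempty_Basis by blast
  have ne: "sphere (0::'a) 1 \<noteq> {}" using b0 by (auto simp: sphere_def intro!: exI[of _ b0])
  obtain z0 where z0: "z0 \<in> sphere 0 1" and mn: "\<And>y. y \<in> sphere 0 1 \<Longrightarrow> N z0 \<le> N y"
    using continuous_attains_inf[OF compact_sphere ne continuous_on_subset[OF cont]] by blast
  have z0nz: "z0 \<noteq> 0" using z0 by auto
  have pos: "N z0 > 0" using n z0nz unfolding is_norm_def by (metis less_eq_real_def)
  show ?thesis
  proof (intro exI[of _ "N z0"] conjI allI pos)
    fix z :: 'a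
    show "N z0 * norm z \<le> N z"
    proof (cases "z = 0")
      case True then show ?thesis using n unfolding is_norm_def by simp
    next
      case False
      then have "(1 / norm z) *\<^sub>R z \<in> sphere 0 1" by simp
      then have "N z0 \<le> N ((1 / norm z) *\<^sub>R z)" by (rule mn)
      also have "\<dots> = N z / norm z" using n unfolding is_norm_def by simp
      finally show ?thesis using False by (simp add: field_simps)
    qed
  qed
qed

lemma dual_norm_props:
  fixes N :: "'a::euclidean_space \<Rightarrow> real"
  assumes n: "is_norm N"
  shows "w \<bullet> z \<le> dual_norm N w * N z" and "0 \<le> dual_norm N w"
    and "\<exists>c>0. \<forall>w. dual_norm N w \<le> norm w / c"
proof -
  obtain c where c: "c > 0" "\<And>z. c * norm z \<le> N z" using norm_lower[OF n] by blast
  define S where "S w = {w \<bullet> z | z. N z \<le> 1}" for w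
  have dn: "dual_norm N w = Sup (S w)" for w unfolding dual_norm_def S_def by simp
  have bdd: "bdd_above (S w)" for w
  proof (rule bdd_aboveI[of _ "norm w / c"])
    fix x assume "x \<in> S w"
    then obtain z where x: "x = w \<bullet> z" and z: "N z \<le> 1" unfolding S_def by blast
    have "norm z \<le> 1 / c" using c(2)[of z] z c(1) by (simp add: field_simps)
    have "x \<le> norm w * norm z" unfolding x by (rule norm_cauchy_schwarz)
    also have "\<dots> \<le> norm w * (1 / c)" using \<open>norm z \<le> 1 / c\<close> by (rule mult_left_mono) auto
    finally show "x \<le> norm w / c" by simp
  qed
  have ne: "S w \<noteq> {}" for w
    unfolding S_def using is_norm_zero[OF n] by (auto intro!: exI[of _ 0])
  have up: "w \<bullet> z \<le> dual_norm N w" if "N z \<le> 1" for w z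
    unfolding dn by (rule cSup_upper[OF _ bdd]) (use that S_def in auto)
  show "0 \<le> dual_norm N w" using up[of 0 w] is_norm_zero[OF n] by simp
  show "w \<bullet> z \<le> dual_norm N w * N z"
  proof (cases "z = 0")
    case True then show ?thesis using is_norm_zero[OF n] by simp
  next
    case False
    then have Nz: "N z > 0" using n unfolding is_norm_def by (metis less_eq_real_def)
    have "N ((1 / N z) *\<^sub>R z) = \<bar>1 / N z\<bar> * N z" using n unfolding is_norm_def by blast
    then have "N ((1 / N z) *\<^sub>R z) = 1" using Nz by simp
    then have "w \<bullet> ((1 / N z) *\<^sub>R z) \<le> dual_norm N w" using up[of "(1 / N z) *\<^sub>R z" w] by linarith
    then show ?thesis using Nz by (simp add: field_simps)
  qed
  show "\<exists>c>0. \<forall>w. dual_norm N w \<le> norm w / c"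
  proof (intro exI[of _ c] conjI allI c(1))
    fix w show "dual_norm N w \<le> norm w / c"
      unfolding dn
    proof (rule cSup_least[OF ne])
      fix x assume "x \<in> S w"
      then obtain z where x: "x = w \<bullet> z" and z: "N z \<le> 1" unfolding S_def by blast
      have "norm z \<le> 1 / c" using c(2)[of z] z c(1) by (simp add: field_simps)
      have "x \<le> norm w * norm z" unfolding x by (rule norm_cauchy_schwarz)
      also have "\<dots> \<le> norm w * (1 / c)" using \<open>norm z \<le> 1 / c\<close> by (rule mult_left_mono) auto
      finally show "x \<le> norm w / c" by simp
    qed
  qed
qed

lemma op_norm_bound:
  fixes A :: "real^'n^'m" and Nd :: "real^'m \<Rightarrow> real"
  assumes n: "is_norm Nd"
  shows "\<bar>z \<bullet> (A *v v)\<bar> \<le> op_norm Nd A * Nd z * norm v"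
proof -
  obtain c where c: "c > 0" "\<And>w. dual_norm Nd w \<le> norm w / c" using dual_norm_props(3)[OF n] by blast
  have bl: "bounded_linear (\<lambda>x. A *v x)" by (simp add: linear_conv_bounded_linear)
  obtain B where B: "B > 0" "\<And>x. norm (A *v x) \<le> norm x * B"
    using bounded_linear.pos_bounded[OF bl] by blast
  define S where "S = {dual_norm Nd (A *v v) / norm v | v. v \<noteq> 0}"
  have on: "op_norm Nd A = Sup S" unfolding op_norm_def S_def by simp
  have bdd: "bdd_above S"
  proof (rule bdd_aboveI[of _ "B / c"])
    fix x assume "x \<in> S"
    then obtain v where x: "x = dual_norm Nd (A *v v) / norm v" and v: "v \<noteq> 0" unfolding S_def by blast
    have "dual_norm Nd (A *v v) \<le> norm v * B / c" using c(2)[of "A *v v"] B(2)[of v] c(1)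
      by (smt (verit) divide_right_mono)
    then show "x \<le> B / c" unfolding x using v by (simp add: field_simps)
  qed
  have key: "dual_norm Nd (A *v v) \<le> op_norm Nd A * norm v" if v: "v \<noteq> 0" for v
  proof -
    have "dual_norm Nd (A *v v) / norm v \<le> op_norm Nd A"
      unfolding on by (rule cSup_upper[OF _ bdd]) (use v S_def in auto)
    then show ?thesis using v by (simp add: field_simps)
  qed
  show ?thesis
  proof (cases "v = 0")
    case True then show ?thesis by simp
  next
    case False
    have Nz: "Nd z \<ge> 0" using n unfolding is_norm_def by simp
    have d0: "0 \<le> dual_norm Nd w" for w using dual_norm_props(2)[OF n] .
    have a: "(A *v v) \<bullet> z \<le> dual_norm Nd (A *v v) * Nd z" by (rule dual_norm_props(1)[OF n])
    have b: "(A *v (-v)) \<bullet> z \<le> dual_norm Nd (A *v (-v)) * Nd z" by (rule dual_norm_props(1)[OF n])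
    have k1: "dual_norm Nd (A *v v) * Nd z \<le> op_norm Nd A * norm v * Nd z"
      using key[OF False] Nz by (simp add: mult_right_mono)
    have k2: "dual_norm Nd (A *v (-v)) * Nd z \<le> op_norm Nd A * norm v * Nd z"
      using key[of "-v"] False Nz by (simp add: mult_right_mono)
    have "A *v (-v) = - (A *v v)" by (simp add: matrix_vector_mult_diff_distrib[of A 0 v, simplified])
    then show ?thesis using a b k1 k2 by (simp add: inner_commute abs_le_iff algebra_simps)
  qed
qed



lemma comb_convex_on:
  fixes F :: "'a::real_vector \<Rightarrow> ereal"
  assumes ninf: "\<And>x. F x \<noteq> -\<infinity>"
    and comb: "\<And>x y a b t. F x \<le> ereal a \<Longrightarrow> F y \<le> ereal b \<Longrightarrow> 0 \<le> t \<Longrightarrow> t \<le> 1 \<Longrightarrow>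
                 F ((1 - t) *\<^sub>R x + t *\<^sub>R y) \<le> ereal ((1 - t) * a + t * b)"
  shows "convex_on (edom F) (\<lambda>x. real_of_ereal (F x))" "convex (edom F)"
proof -
  have fin: "F x = ereal (real_of_ereal (F x))" if "x \<in> edom F" for x
    using that ninf[of x] unfolding edom_def by (cases "F x") auto
  have main: "(1 - t) *\<^sub>R x + t *\<^sub>R y \<in> edom F \<and>
      real_of_ereal (F ((1 - t) *\<^sub>R x + t *\<^sub>R y)) \<le> (1 - t) * real_of_ereal (F x) + t * real_of_ereal (F y)"
    if "x \<in> edom F" "y \<in> edom F" "0 \<le> t" "t \<le> 1" for x y t
  proof -
    have le: "F ((1 - t) *\<^sub>R x + t *\<^sub>R y) \<le> ereal ((1 - t) * real_of_ereal (F x) + t * real_of_ereal (F y))"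
      by (rule comb) (use fin that in auto)
    have lt: "F ((1 - t) *\<^sub>R x + t *\<^sub>R y) < \<infinity>"
      by (rule order.strict_trans1[OF le]) simp
    obtain r where r: "F ((1 - t) *\<^sub>R x + t *\<^sub>R y) = ereal r"
      using lt ninf[of "(1 - t) *\<^sub>R x + t *\<^sub>R y"] by (cases "F ((1 - t) *\<^sub>R x + t *\<^sub>R y)") auto
    show ?thesis using lt le r unfolding edom_def by simp
  qed
  show cv: "convex (edom F)"
    unfolding convex_def
  proof (intro ballI allI impI)
    fix x y and u v :: real assume "x \<in> edom F" "y \<in> edom F" "0 \<le> u" "0 \<le> v" "u + v = 1"
    then have uv: "u = 1 - v" "v \<le> 1" by simp_all
    have "u *\<^sub>R x + v *\<^sub>R y = (1 - v) *\<^sub>R x + v *\<^sub>R y" using uv(1) by simp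
    then show "u *\<^sub>R x + v *\<^sub>R y \<in> edom F"
      using main[OF \<open>x \<in> edom F\<close> \<open>y \<in> edom F\<close> \<open>0 \<le> v\<close> uv(2)] by metis
  qed
  show "convex_on (edom F) (\<lambda>x. real_of_ereal (F x))"
  proof (rule convex_onI[OF _ cv])
    fix x y :: 'a and t :: real assume "0 < t" "t < 1" "x \<in> edom F" "y \<in> edom F"
    then show "real_of_ereal (F ((1 - t) *\<^sub>R x + t *\<^sub>R y)) \<le> (1 - t) * real_of_ereal (F x) + t * real_of_ereal (F y)"
      using main[of x y t] by simp
  qed
qed

lemma econvex_comb:
  fixes f :: "'a::real_vector \<Rightarrow> ereal"
  assumes c: "econvex f" and x: "f x \<le> ereal a" and y: "f y \<le> ereal b" and t: "0 \<le> t" "t \<le> 1"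
  shows "f ((1 - t) *\<^sub>R x + t *\<^sub>R y) \<le> ereal ((1 - t) * a + t * b)"
proof -
  have "(x, a) \<in> epigraph f" "(y, b) \<in> epigraph f" using x y unfolding epigraph_def by auto
  then have "(1 - t) *\<^sub>R (x, a) + t *\<^sub>R (y, b) \<in> epigraph f"
    using c t unfolding econvex_def by (intro convexD) auto
  then show ?thesis unfolding epigraph_def by simp
qed

lemma conj_ninf:
  fixes g :: "'a::real_inner \<Rightarrow> ereal"
  assumes p: "eproper g"
  shows "conjugate g z \<noteq> -\<infinity>"
proof -
  obtain x0 where x0: "g x0 < \<infinity>" "g x0 \<noteq> -\<infinity>" using p unfolding eproper_def by blast
  then obtain r where r: "g x0 = ereal r" by (cases "g x0") auto
  have "ereal (z \<bullet> x0) - g x0 \<le> conjugate g z" unfolding conjugate_def by (rule SUP_upper) simp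
  then show ?thesis using r by auto
qed

lemma conj_comb:
  fixes g :: "'a::real_inner \<Rightarrow> ereal"
  assumes p: "eproper g" and x: "conjugate g z \<le> ereal a" and y: "conjugate g w \<le> ereal b"
    and t: "0 \<le> t" "t \<le> 1"
  shows "conjugate g ((1 - t) *\<^sub>R z + t *\<^sub>R w) \<le> ereal ((1 - t) * a + t * b)"
  unfolding conjugate_def
proof (rule SUP_least)
  fix x assume "x \<in> (UNIV :: 'a set)"
  show "ereal (((1 - t) *\<^sub>R z + t *\<^sub>R w) \<bullet> x) - g x \<le> ereal ((1 - t) * a + t * b)"
  proof (cases "g x")
    case (real r)
    have "ereal (z \<bullet> x) - g x \<le> conjugate g z" unfolding conjugate_def by (rule SUP_upper) simp
    then have "ereal (z \<bullet> x) - g x \<le> ereal a" using x by (rule order_trans)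
    then have 1: "z \<bullet> x - r \<le> a" using real by simp
    have "ereal (w \<bullet> x) - g x \<le> conjugate g w" unfolding conjugate_def by (rule SUP_upper) simp
    then have "ereal (w \<bullet> x) - g x \<le> ereal b" using y by (rule order_trans)
    then have 2: "w \<bullet> x - r \<le> b" using real by simp
    have "((1 - t) *\<^sub>R z + t *\<^sub>R w) \<bullet> x - r = (1 - t) * (z \<bullet> x - r) + t * (w \<bullet> x - r)"
      by (simp add: inner_add_left algebra_simps)
    also have "\<dots> \<le> (1 - t) * a + t * b"
      using 1 2 t by (intro add_mono mult_left_mono) auto
    finally show ?thesis using real by simp
  next
    case PInf then show ?thesis by simp
  next
    case MInf then show ?thesis using p unfolding eproper_def by auto
  qed
qed



lemma young_K:
  fixes K b c s t :: real
  assumes b: "b \<ge> 0" and c: "c \<ge> 0" and s: "s > 0" and t: "t > 0" and K: "s * t * K\<^sup>2 \<le> 1"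
  shows "K * b * c \<le> b\<^sup>2 / (2 * s) + c\<^sup>2 / (2 * t)"
proof -
  have "0 \<le> (b - s * \<bar>K\<bar> * c)\<^sup>2" by simp
  then have "2 * s * (\<bar>K\<bar> * b * c) \<le> b\<^sup>2 + s\<^sup>2 * K\<^sup>2 * c\<^sup>2"
    by (simp add: power2_eq_square algebra_simps)
  then have 1: "\<bar>K\<bar> * b * c \<le> b\<^sup>2 / (2 * s) + s * K\<^sup>2 * c\<^sup>2 / 2"
    using s by (simp add: field_simps power2_eq_square)
  have "s * K\<^sup>2 \<le> 1 / t" using K t by (simp add: field_simps)
  then have "s * K\<^sup>2 * c\<^sup>2 / 2 \<le> (1 / t) * c\<^sup>2 / 2"
    by (intro divide_right_mono mult_right_mono) auto
  then have 2: "s * K\<^sup>2 * c\<^sup>2 / 2 \<le> c\<^sup>2 / (2 * t)" by simp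
  have "K * b * c \<le> \<bar>K\<bar> * b * c" using b c by (simp add: mult_right_mono)
  then show ?thesis using 1 2 by linarith
qed

lemma dot_lmul_matrix': "y \<bullet> ((x::real^_) v* A) = x \<bullet> (A *v y)"
  by (metis dot_lmul_matrix inner_commute)

lemma bilin_id:
  fixes x x1 u gx gx1 gu :: "real^'n" and z z1 w :: "real^'m" and A :: "real^'n^'m" and t :: real
  shows "- ((transpose A *v z) \<bullet> (x1 - u))
     + (A *v (2 *\<^sub>R x1 - x + t *\<^sub>R (gx - gx1))) \<bullet> (z1 - w) + w \<bullet> (A *v x1) - z1 \<bullet> (A *v u)
   = (z1 - w) \<bullet> (A *v (x1 - u - t *\<^sub>R (gx1 - gu))) - (z - w) \<bullet> (A *v (x - u - t *\<^sub>R (gx - gu)))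
     + (z1 - z) \<bullet> (A *v (x1 - x + t *\<^sub>R (gx - gu)))"
  by (simp add: dot_lmul_matrix dot_lmul_matrix' inner_diff_left inner_diff_right inner_add_left inner_add_right
      matrix_vector_mult_diff_distrib matrix_vector_right_distrib matrix_vector_mult_scaleR
      inner_commute algebra_simps)

lemma step_ineq:
  fixes x x1 u gx gx1 gu :: "real^'n" and z z1 w :: "real^'m" and A :: "real^'n^'m"
    and fx1 fu sz1 sw hx hx1 hu dux dux1 dx1x dwz dwz1 dz1z K s t :: real
    and Nd :: "real^'m \<Rightarrow> real"
  assumes P: "t * fx1 + (t *\<^sub>R (transpose A *v z) + t *\<^sub>R gx) \<bullet> x1 + dx1x + dux1
      \<le> t * fu + (t *\<^sub>R (transpose A *v z) + t *\<^sub>R gx) \<bullet> u + dux"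
    and D: "s * sz1 + (- s *\<^sub>R (A *v (2 *\<^sub>R x1 - x + t *\<^sub>R (gx - gx1)))) \<bullet> z1 + dz1z + dwz1
      \<le> s * sw + (- s *\<^sub>R (A *v (2 *\<^sub>R x1 - x + t *\<^sub>R (gx - gx1)))) \<bullet> w + dwz"
    and coco: "t / 2 * (norm (gx - gu))\<^sup>2 \<le> hu - hx - gx \<bullet> (u - x)"
    and sx: "1/2 * (norm (x1 - x))\<^sup>2 \<le> dx1x" and sz: "1/2 * (Nd (z1 - z))\<^sup>2 \<le> dz1z"
    and bnd: "\<bar>(z1 - z) \<bullet> (A *v (x1 - x + t *\<^sub>R (gx - gu)))\<bar>
               \<le> K * Nd (z1 - z) * norm (x1 - x + t *\<^sub>R (gx - gu))"
    and Nn: "Nd (z1 - z) \<ge> 0" and st: "s > 0" "t > 0" "s * t * K\<^sup>2 \<le> 1"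
  shows "fx1 + hx1 + w \<bullet> (A *v x1) - sw - (fu + hu + z1 \<bullet> (A *v u) - sz1)
   \<le> (dux / t + dwz / s - (z - w) \<bullet> (A *v (x - u - t *\<^sub>R (gx - gu))) - (hx - hu - gu \<bullet> (x - u)))
   - (dux1 / t + dwz1 / s - (z1 - w) \<bullet> (A *v (x1 - u - t *\<^sub>R (gx1 - gu))) - (hx1 - hu - gu \<bullet> (x1 - u)))"
proof -
  define xb where "xb = 2 *\<^sub>R x1 - x + t *\<^sub>R (gx - gx1)"
  define v where "v = x1 - x + t *\<^sub>R (gx - gu)"
  have e1: "(t *\<^sub>R (transpose A *v z) + t *\<^sub>R gx) \<bullet> x1 - (t *\<^sub>R (transpose A *v z) + t *\<^sub>R gx) \<bullet> u
      = t * ((transpose A *v z) \<bullet> (x1 - u) + gx \<bullet> (x1 - u))"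
    by (simp add: inner_diff_right inner_add_left algebra_simps)
  have "t * (fx1 - fu + ((transpose A *v z) \<bullet> (x1 - u) + gx \<bullet> (x1 - u))) \<le> dux - dux1 - dx1x"
    using P e1 by (simp add: algebra_simps)
  then have "fx1 - fu + ((transpose A *v z) \<bullet> (x1 - u) + gx \<bullet> (x1 - u)) \<le> (dux - dux1 - dx1x) / t"
    using st by (simp add: field_simps)
  then have P': "fx1 - fu \<le> dux / t - dux1 / t - dx1x / t - (transpose A *v z) \<bullet> (x1 - u) - gx \<bullet> (x1 - u)"
    by (simp add: diff_divide_distrib)
  have e2: "(- s *\<^sub>R (A *v xb)) \<bullet> z1 - (- s *\<^sub>R (A *v xb)) \<bullet> w = - s * ((A *v xb) \<bullet> (z1 - w))"
    by (simp add: inner_diff_right algebra_simps)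
  have "s * (sz1 - sw - (A *v xb) \<bullet> (z1 - w)) \<le> dwz - dwz1 - dz1z"
    using D e2 unfolding xb_def[symmetric] by (simp add: algebra_simps)
  then have "sz1 - sw - (A *v xb) \<bullet> (z1 - w) \<le> (dwz - dwz1 - dz1z) / s"
    using st by (simp add: field_simps)
  then have D': "sz1 - sw \<le> dwz / s - dwz1 / s - dz1z / s + (A *v xb) \<bullet> (z1 - w)"
    by (simp add: diff_divide_distrib)
  have I1: "- ((transpose A *v z) \<bullet> (x1 - u)) + (A *v xb) \<bullet> (z1 - w) + w \<bullet> (A *v x1) - z1 \<bullet> (A *v u)
     = (z1 - w) \<bullet> (A *v (x1 - u - t *\<^sub>R (gx1 - gu))) - (z - w) \<bullet> (A *v (x - u - t *\<^sub>R (gx - gu)))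
       + (z1 - z) \<bullet> (A *v v)"
    unfolding xb_def v_def by (rule bilin_id)
  have I2: "hx1 - hu - gx \<bullet> (x1 - u) + (x1 - x) \<bullet> (gx - gu)
     = (hx1 - hu - gu \<bullet> (x1 - u)) - (hx - hu - gu \<bullet> (x - u)) - (hu - hx - gx \<bullet> (u - x))"
    by (simp add: inner_diff_left inner_diff_right inner_commute algebra_simps)
  have I3: "(norm v)\<^sup>2 = (norm (x1 - x))\<^sup>2 + 2 * t * ((x1 - x) \<bullet> (gx - gu)) + t\<^sup>2 * (norm (gx - gu))\<^sup>2"
    unfolding v_def power2_norm_eq_inner
    by (simp add: inner_add_left inner_add_right inner_commute power2_eq_square algebra_simps)
  have Y: "K * Nd (z1 - z) * norm v \<le> (Nd (z1 - z))\<^sup>2 / (2 * s) + (norm v)\<^sup>2 / (2 * t)"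
    by (rule young_K[OF Nn norm_ge_zero st])
  have Y2: "(norm v)\<^sup>2 / (2 * t) = (norm (x1 - x))\<^sup>2 / (2 * t) + (x1 - x) \<bullet> (gx - gu) + t / 2 * (norm (gx - gu))\<^sup>2"
    unfolding I3 using st by (simp add: field_simps power2_eq_square)
  have sx': "(norm (x1 - x))\<^sup>2 / (2 * t) \<le> dx1x / t"
    using sx st by (simp add: field_simps)
  have sz': "(Nd (z1 - z))\<^sup>2 / (2 * s) \<le> dz1z / s"
    using sz st by (simp add: field_simps)
  have B: "(z1 - z) \<bullet> (A *v v) \<le> K * Nd (z1 - z) * norm v" using bnd unfolding v_def by linarith
  show ?thesis using P' D' I1 I2 Y Y2 sx' sz' B coco by linarith
qed


lemma V_bounds:
  fixes x u gx gu :: "real^'n" and z w :: "real^'m" and A :: "real^'n^'m"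
    and hx hu dux dwz K s t :: real and Nd :: "real^'m \<Rightarrow> real"
  assumes coco: "t / 2 * (norm (gx - gu))\<^sup>2 \<le> hu - hx - gx \<bullet> (u - x)"
    and Eg: "0 \<le> hx - hu - gu \<bullet> (x - u)"
    and sx: "1/2 * (norm (u - x))\<^sup>2 \<le> dux" and sz: "1/2 * (Nd (z - w))\<^sup>2 \<le> dwz"
    and bnd: "\<bar>(z - w) \<bullet> (A *v (x - u - t *\<^sub>R (gx - gu)))\<bar>
               \<le> K * Nd (z - w) * norm (x - u - t *\<^sub>R (gx - gu))"
    and Nn: "Nd (z - w) \<ge> 0" and st: "s > 0" "t > 0" "s * t * K\<^sup>2 \<le> 1"
  shows "0 \<le> dux / t + dwz / s - (z - w) \<bullet> (A *v (x - u - t *\<^sub>R (gx - gu))) - (hx - hu - gu \<bullet> (x - u))"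
    and "dux / t + dwz / s - (z - w) \<bullet> (A *v (x - u - t *\<^sub>R (gx - gu))) - (hx - hu - gu \<bullet> (x - u))
          \<le> 2 * (dux / t + dwz / s)"
proof -
  define q where "q = x - u - t *\<^sub>R (gx - gu)"
  have I3: "(norm q)\<^sup>2 = (norm (u - x))\<^sup>2 - 2 * t * ((x - u) \<bullet> (gx - gu)) + t\<^sup>2 * (norm (gx - gu))\<^sup>2"
    unfolding q_def power2_norm_eq_inner
    by (simp add: inner_add_left inner_add_right inner_diff_left inner_diff_right inner_commute power2_eq_square algebra_simps)
  have I2: "(x - u) \<bullet> (gx - gu) = (hx - hu - gu \<bullet> (x - u)) + (hu - hx - gx \<bullet> (u - x))"
    by (simp add: inner_diff_left inner_diff_right inner_commute algebra_simps)
  have Y: "K * Nd (z - w) * norm q \<le> (Nd (z - w))\<^sup>2 / (2 * s) + (norm q)\<^sup>2 / (2 * t)"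
    by (rule young_K[OF Nn norm_ge_zero st])
  have Y2: "(norm q)\<^sup>2 / (2 * t) = (norm (u - x))\<^sup>2 / (2 * t) - (x - u) \<bullet> (gx - gu) + t / 2 * (norm (gx - gu))\<^sup>2"
    unfolding I3 using st by (simp add: field_simps power2_eq_square)
  have sx': "(norm (u - x))\<^sup>2 / (2 * t) \<le> dux / t"
    using sx st by (simp add: field_simps)
  have sz': "(Nd (z - w))\<^sup>2 / (2 * s) \<le> dwz / s"
    using sz st by (simp add: field_simps)
  have B: "\<bar>(z - w) \<bullet> (A *v q)\<bar> \<le> K * Nd (z - w) * norm q" using bnd unfolding q_def .
  show "0 \<le> dux / t + dwz / s - (z - w) \<bullet> (A *v (x - u - t *\<^sub>R (gx - gu))) - (hx - hu - gu \<bullet> (x - u))"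
    using I2 Y Y2 sx' sz' B coco Eg unfolding q_def by linarith
  show "dux / t + dwz / s - (z - w) \<bullet> (A *v (x - u - t *\<^sub>R (gx - gu))) - (hx - hu - gu \<bullet> (x - u))
          \<le> 2 * (dux / t + dwz / s)"
  proof -
    have m: "2 * (dux / t + dwz / s) = dux / t + dux / t + dwz / s + dwz / s" by simp
    have B2: "- ((z - w) \<bullet> (A *v q)) \<le> K * Nd (z - w) * norm q" using B by linarith
    show ?thesis unfolding m using I2 Y Y2 sx' sz' B2 coco Eg unfolding q_def by linarith
  qed
qed



lemma cocoercive:
  fixes h :: "'a::real_inner \<Rightarrow> real" and gh :: "'a \<Rightarrow> 'a"
  assumes c: "convex_on UNIV h" and d: "\<And>u. (h has_derivative (\<lambda>v. gh u \<bullet> v)) (at u)"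
    and sm: "\<And>u w. h w - h u - gh u \<bullet> (w - u) \<le> L / 2 * (norm (w - u))\<^sup>2" and L: "L > 0"
    and t: "0 < t" "t \<le> 1 / L"
  shows "t / 2 * (norm (gh u - gh x))\<^sup>2 \<le> h u - h x - gh x \<bullet> (u - x)"
proof -
  define g where "g = gh u - gh x"
  define y where "y = u - (1 / L) *\<^sub>R g"
  have 1: "h x + gh x \<bullet> (y - x) \<le> h y" by (rule grad_ineq[OF c _ _ d]) auto
  have 2: "h y - h u - gh u \<bullet> (y - u) \<le> L / 2 * (norm (y - u))\<^sup>2" by (rule sm)
  have e1: "gh x \<bullet> (y - x) = gh x \<bullet> (u - x) - (1 / L) * (gh x \<bullet> g)"
    unfolding y_def by (simp add: inner_diff_right algebra_simps)
  have e2: "gh u \<bullet> (y - u) = - (1 / L) * (gh u \<bullet> g)"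
    unfolding y_def by (simp add: inner_diff_right algebra_simps)
  have e3: "L / 2 * (norm (y - u))\<^sup>2 = (1 / (2 * L)) * (norm g)\<^sup>2"
    unfolding y_def using L by (simp add: power2_eq_square field_simps)
  have e4: "gh u \<bullet> g - gh x \<bullet> g = (norm g)\<^sup>2"
    unfolding g_def by (simp add: power2_norm_eq_inner inner_diff_left)
  have "(1 / L) * (gh u \<bullet> g) - (1 / L) * (gh x \<bullet> g) = (1 / L) * (norm g)\<^sup>2"
    using e4 by (metis right_diff_distrib)
  then have main: "(1 / (2 * L)) * (norm g)\<^sup>2 \<le> h u - h x - gh x \<bullet> (u - x)"
    using 1 2 e1 e2 e3 L by (simp add: field_simps) 
  have "t / 2 \<le> 1 / (2 * L)" using t L by (simp add: field_simps)
  then have "t / 2 * (norm g)\<^sup>2 \<le> (1 / (2 * L)) * (norm g)\<^sup>2" by (rule mult_right_mono) simp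
  then show ?thesis using main unfolding g_def by linarith
qed



lemma avg_jensen:
  fixes y :: "nat \<Rightarrow> 'a::real_vector"
  assumes c: "convex_on C F" and k: "k \<ge> 1" and y: "\<And>i. i \<in> {1..k} \<Longrightarrow> y i \<in> C"
  shows "(1 / real k) *\<^sub>R (\<Sum>i=1..k. y i) \<in> C"
    and "F ((1 / real k) *\<^sub>R (\<Sum>i=1..k. y i)) \<le> (1 / real k) * (\<Sum>i=1..k. F (y i))"
proof -
  have s1: "(\<Sum>i\<in>{1..k}. 1 / real k) = 1" using k by simp
  have eq: "(1 / real k) *\<^sub>R (\<Sum>i=1..k. y i) = (\<Sum>i\<in>{1..k}. (1 / real k) *\<^sub>R y i)"
    by (simp add: scaleR_sum_right)
  have cC: "convex C" using c convex_on_def by blast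
  show "(1 / real k) *\<^sub>R (\<Sum>i=1..k. y i) \<in> C"
    unfolding eq by (rule convex_sum[OF _ cC s1]) (use y in auto)
  have "F (\<Sum>i\<in>{1..k}. (1 / real k) *\<^sub>R y i) \<le> (\<Sum>i\<in>{1..k}. (1 / real k) * F (y i))"
    by (rule convex_on_sum[OF _ _ c s1]) (use y k in auto)
  then show "F ((1 / real k) *\<^sub>R (\<Sum>i=1..k. y i)) \<le> (1 / real k) * (\<Sum>i=1..k. F (y i))"
    unfolding eq by (simp add: sum_distrib_left)
qed

lemma bprox_prop:
  assumes w: "bprox_wellposed D phi dphi F" and y: "y \<in> interior D"
  shows "is_bprox D phi dphi F y a (bprox D phi dphi F y a)" "bprox D phi dphi F y a \<in> interior D"
proof -
  have ex: "\<exists>!p. is_bprox D phi dphi F y a p" using w y unfolding bprox_wellposed_def by blast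
  show 1: "is_bprox D phi dphi F y a (bprox D phi dphi F y a)"
    unfolding bprox_def by (rule theI'[OF ex])
  show "bprox D phi dphi F y a \<in> interior D" using w y 1 unfolding bprox_wellposed_def by blast
qed

lemma prox_three_point:
  fixes G :: "'a::euclidean_space \<Rightarrow> ereal"
  assumes bk: "bregman_kernel D phi dphi" and ip: "is_bprox D phi dphi (\<lambda>v. ereal c * G v) y a p"
    and pint: "p \<in> interior D" and c: "c > 0" and ninf: "\<And>v. G v \<noteq> -\<infinity>"
    and cG: "convex_on (edom G) (\<lambda>v. real_of_ereal (G v))" and u: "u \<in> D" "u \<in> edom G"
  shows "p \<in> edom G"
    and "c * real_of_ereal (G p) + a \<bullet> p + bdist phi dphi p y + bdist phi dphi u p
         \<le> c * real_of_ereal (G u) + a \<bullet> u + bdist phi dphi u y"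
proof -
  have fin: "G v = ereal (real_of_ereal (G v))" if "v \<in> edom G" for v
    using that ninf[of v] unfolding edom_def by (cases "G v") auto
  have pD: "p \<in> D" using pint interior_subset by blast
  have mn: "ereal c * G p + ereal (a \<bullet> p + bdist phi dphi p y) \<le> ereal c * G v + ereal (a \<bullet> v + bdist phi dphi v y)"
    if "v \<in> D" for v using ip that unfolding is_bprox_def by blast
  obtain r where r: "G u = ereal r" using fin[OF u(2)] by blast
  have "ereal c * G u + ereal (a \<bullet> u + bdist phi dphi u y) < \<infinity>" unfolding r by simp
  then have "ereal c * G p + ereal (a \<bullet> p + bdist phi dphi p y) < \<infinity>"
    using order.strict_trans1[OF mn[OF u(1)]] by blast
  then have "G p \<noteq> \<infinity>" using c by auto
  then show pG: "p \<in> edom G" unfolding edom_def by (simp add: top.not_eq_extremum)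
  have cD: "convex D" using bk unfolding bregman_kernel_def by blast
  have dp: "(phi has_derivative (\<lambda>v. dphi p \<bullet> v)) (at p)" using bk pint unfolding bregman_kernel_def by blast
  have cF: "convex_on (edom G) (\<lambda>v. c * real_of_ereal (G v))" using convex_on_cmul[OF _ cG] c by simp
  show "c * real_of_ereal (G p) + a \<bullet> p + bdist phi dphi p y + bdist phi dphi u p
         \<le> c * real_of_ereal (G u) + a \<bullet> u + bdist phi dphi u y"
  proof (rule three_point[where phi=phi and dphi=dphi and p=p, OF cD cF pD pG u dp])
    fix v assume v: "v \<in> D" "v \<in> edom G"
    have "ereal c * G p + ereal (a \<bullet> p + bdist phi dphi p y) \<le> ereal c * G v + ereal (a \<bullet> v + bdist phi dphi v y)"
      by (rule mn[OF v(1)])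
    then show "c * real_of_ereal (G p) + (a \<bullet> p + bdist phi dphi p y) \<le> c * real_of_ereal (G v) + (a \<bullet> v + bdist phi dphi v y)"
    proof -
      obtain rp where rp: "G p = ereal rp" using fin[OF pG] by blast
      obtain rv where rv: "G v = ereal rv" using fin[OF v(2)] by blast
      show ?thesis using \<open>ereal c * G p + _ \<le> _\<close> unfolding rp rv by simp
    qed
  qed
qed



theorem mainTheorem9:
  fixes f :: "real^'n \<Rightarrow> ereal" and g :: "real^'m \<Rightarrow> ereal"
    and h :: "real^'n \<Rightarrow> real" and gh :: "real^'n \<Rightarrow> real^'n"
    and A :: "real^'n^'m" and L \<sigma> \<tau> :: real
    and Dp :: "(real^'n) set" and phip :: "real^'n \<Rightarrow> real" and dphip :: "real^'n \<Rightarrow> real^'n"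
    and Dd :: "(real^'m) set" and phid :: "real^'m \<Rightarrow> real" and dphid :: "real^'m \<Rightarrow> real^'m"
    and Nd :: "real^'m \<Rightarrow> real"
    and xk :: "nat \<Rightarrow> real^'n" and zk :: "nat \<Rightarrow> real^'m"
    and k :: nat and x :: "real^'n" and z :: "real^'m"
  assumes f_cc: "econvex f" "eclosed f"
    and g_cc: "econvex g" "eclosed g" "eproper g"
    and fh_proper: "eproper (\<lambda>u. f u + ereal (h u))"
    and h_conv: "convex_on UNIV h"
    and h_grad: "\<And>u. (h has_derivative (\<lambda>v. gh u \<bullet> v)) (at u)"
    and L_pos: "L > 0"
    and h_smooth: "\<And>u w. h w - h u - gh u \<bullet> (w - u) \<le> L / 2 * (norm (w - u))\<^sup>2"
    and kp: "bregman_kernel Dp phip dphip"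
    and kd: "bregman_kernel Dd phid dphid"
    and Nd_norm: "is_norm Nd"
    and dp_strong: "\<And>u w. u \<in> Dp \<Longrightarrow> w \<in> interior Dp \<Longrightarrow> bdist phip dphip u w \<ge> 1/2 * (norm (u - w))\<^sup>2"
    and dd_strong: "\<And>u w. u \<in> Dd \<Longrightarrow> w \<in> interior Dd \<Longrightarrow> bdist phid dphid u w \<ge> 1/2 * (Nd (u - w))\<^sup>2"
    and prox_p: "bprox_wellposed Dp phip dphip (\<lambda>u. ereal \<tau> * f u)"
    and prox_d: "bprox_wellposed Dd phid dphid (\<lambda>w. ereal \<sigma> * conjugate g w)"
    and steps: "\<sigma> > 0" "\<tau> > 0" "\<sigma> * \<tau> * (op_norm Nd A)\<^sup>2 \<le> 1" "\<tau> \<le> 1 / L"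
    and saddle: "\<exists>xs zs. xs \<in> Dp \<and> zs \<in> Dd
                   \<and> - (gh xs + transpose A *v zs) \<in> subdiff f xs
                   \<and> A *v xs \<in> subdiff (conjugate g) zs"
    and init: "xk 0 \<in> interior Dp" "zk 0 \<in> interior Dd"
    and iter_x: "\<And>j. xk (Suc j) = bprox Dp phip dphip (\<lambda>u. ereal \<tau> * f u) (xk j)
                   (\<tau> *\<^sub>R (transpose A *v zk j) + \<tau> *\<^sub>R gh (xk j))"
    and iter_z: "\<And>j. zk (Suc j) = bprox Dd phid dphid (\<lambda>w. ereal \<sigma> * conjugate g w) (zk j)
                   (- \<sigma> *\<^sub>R (A *v (2 *\<^sub>R xk (Suc j) - xk j + \<tau> *\<^sub>R (gh (xk j) - gh (xk (Suc j))))))"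
    and k_pos: "k \<ge> 1"
    and x_mem: "x \<in> edom f \<inter> Dp"
    and z_mem: "z \<in> edom (conjugate g) \<inter> Dd"
  shows "lagrangian f h g A ((1 / real k) *\<^sub>R (\<Sum>i=1..k. xk i)) z
           - lagrangian f h g A x ((1 / real k) *\<^sub>R (\<Sum>i=1..k. zk i))
         \<le> ereal (3 / real k * (2 / \<tau> * bdist phip dphip x (xk 0) + 1 / \<sigma> * bdist phid dphid z (zk 0)))"
proof -
  note xm = x_mem and zm = z_mem
  have xD: "x \<in> Dp" and xf: "x \<in> edom f" using x_mem by auto
  have zD: "z \<in> Dd" and zg: "z \<in> edom (conjugate g)" using z_mem by auto
  have f_ninf: "f v \<noteq> -\<infinity>" for v
  proof
    assume "f v = -\<infinity>"
    then have "f v + ereal (h v) = -\<infinity>" by simp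
    then show False using fh_proper unfolding eproper_def by blast
  qed
  have g_ninf: "conjugate g w \<noteq> -\<infinity>" for w using conj_ninf[OF g_cc(3)] .
  have cf: "convex_on (edom f) (\<lambda>v. real_of_ereal (f v))"
    using comb_convex_on(1)[OF f_ninf econvex_comb[OF f_cc(1)]] by blast
  have cg: "convex_on (edom (conjugate g)) (\<lambda>v. real_of_ereal (conjugate g v))"
    using comb_convex_on(1)[OF g_ninf conj_comb[OF g_cc(3)]] by blast
  have ffin: "f v = ereal (real_of_ereal (f v))" if "v \<in> edom f" for v
    using that f_ninf[of v] unfolding edom_def by (cases "f v") auto
  have gfin: "conjugate g v = ereal (real_of_ereal (conjugate g v))" if "v \<in> edom (conjugate g)" for v
    using that g_ninf[of v] unfolding edom_def by (cases "conjugate g v") auto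
  have xint: "xk j \<in> interior Dp" for j
  proof (induction j)
    case 0 then show ?case using init(1) .
  next
    case (Suc j) then show ?case unfolding iter_x[of j] by (rule bprox_prop(2)[OF prox_p])
  qed
  have zint: "zk j \<in> interior Dd" for j
  proof (induction j)
    case 0 then show ?case using init(2) .
  next
    case (Suc j) then show ?case unfolding iter_z[of j] by (rule bprox_prop(2)[OF prox_d])
  qed
  have xDj: "xk j \<in> Dp" for j using xint[of j] interior_subset by blast
  have zDj: "zk j \<in> Dd" for j using zint[of j] interior_subset by blast
  have ipx: "is_bprox Dp phip dphip (\<lambda>u. ereal \<tau> * f u) (xk j)
      (\<tau> *\<^sub>R (transpose A *v zk j) + \<tau> *\<^sub>R gh (xk j)) (xk (Suc j))" for j
    unfolding iter_x[of j] by (rule bprox_prop(1)[OF prox_p xint])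
  have ipz: "is_bprox Dd phid dphid (\<lambda>w. ereal \<sigma> * conjugate g w) (zk j)
      (- \<sigma> *\<^sub>R (A *v (2 *\<^sub>R xk (Suc j) - xk j + \<tau> *\<^sub>R (gh (xk j) - gh (xk (Suc j)))))) (zk (Suc j))" for j
    unfolding iter_z[of j] by (rule bprox_prop(1)[OF prox_d zint])
  note Px = prox_three_point[OF kp ipx xint steps(2) f_ninf cf xD xf]
  note Pz = prox_three_point[OF kd ipz zint steps(1) g_ninf cg zD zg]
  have xf1: "xk (Suc j) \<in> edom f" for j using Px(1) .
  have zg1: "zk (Suc j) \<in> edom (conjugate g)" for j using Pz(1) .
  have coco: "\<tau> / 2 * (norm (gh v - gh x))\<^sup>2 \<le> h x - h v - gh v \<bullet> (x - v)" for v
    using cocoercive[OF h_conv h_grad h_smooth L_pos steps(2) steps(4), of x v] by (simp add: norm_minus_commute)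
  have Nn: "Nd v \<ge> 0" for v using Nd_norm unfolding is_norm_def by blast
  have bnd: "\<bar>w \<bullet> (A *v v)\<bar> \<le> op_norm Nd A * Nd w * norm v" for w v
    by (rule op_norm_bound[OF Nd_norm])
  define V where "V j = bdist phip dphip x (xk j) / \<tau> + bdist phid dphid z (zk j) / \<sigma>
      - (zk j - z) \<bullet> (A *v (xk j - x - \<tau> *\<^sub>R (gh (xk j) - gh x))) - (h (xk j) - h x - gh x \<bullet> (xk j - x))" for j
  define Lx where "Lx v = ((real_of_ereal (f v) + h v) + z \<bullet> (A *v v)) + (- real_of_ereal (conjugate g z))" for v
  define Lz where "Lz w = (real_of_ereal (conjugate g w) + (- (w \<bullet> (A *v x)))) + (- real_of_ereal (f x) - h x)" for w
  have step: "Lx (xk (Suc j)) + Lz (zk (Suc j)) \<le> V j - V (Suc j)" for j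
  proof -
    have "real_of_ereal (f (xk (Suc j))) + h (xk (Suc j)) + z \<bullet> (A *v xk (Suc j)) - real_of_ereal (conjugate g z)
        - (real_of_ereal (f x) + h x + zk (Suc j) \<bullet> (A *v x) - real_of_ereal (conjugate g (zk (Suc j))))
      \<le> V j - V (Suc j)"
      unfolding V_def
      by (rule step_ineq[where Nd=Nd and K="op_norm Nd A", OF Px(2)[of j] Pz(2)[of j] coco[of "xk j"] dp_strong[OF xDj[of "Suc j"] xint[of j]]
            dd_strong[OF zDj[of "Suc j"] zint[of j]] bnd[of "zk (Suc j) - zk j" "xk (Suc j) - xk j + \<tau> *\<^sub>R (gh (xk j) - gh x)"] Nn[of "zk (Suc j) - zk j"] steps(1,2,3)])
    then show ?thesis unfolding Lx_def Lz_def by linarith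
  qed
  have tel: "(\<Sum>i=1..n. Lx (xk i) + Lz (zk i)) \<le> V 0 - V n" for n
  proof (induction n)
    case 0 then show ?case by simp
  next
    case (Suc n) then show ?case using step[of n] by simp
  qed
  have Vb: "0 \<le> V n \<and> V n \<le> 2 * (bdist phip dphip x (xk n) / \<tau> + bdist phid dphid z (zk n) / \<sigma>)" for n
  proof -
    have Eg: "h x + gh x \<bullet> (xk n - x) \<le> h (xk n)" by (rule grad_ineq[OF h_conv _ _ h_grad]) auto
    have sz: "1/2 * (Nd (zk n - z))\<^sup>2 \<le> bdist phid dphid z (zk n)"
      using dd_strong[OF zD zint[of n]] is_norm_neg[OF Nd_norm, of "zk n - z"] by simp
    have "0 \<le> h (xk n) - h x - gh x \<bullet> (xk n - x)" using Eg by simp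
    note vb = V_bounds[where Nd=Nd and K="op_norm Nd A", OF coco[of "xk n"] this dp_strong[OF xD xint[of n]] sz bnd[of "zk n - z" "xk n - x - \<tau> *\<^sub>R (gh (xk n) - gh x)"] Nn[of "zk n - z"] steps(1,2,3)]
    show ?thesis using vb unfolding V_def by simp
  qed
  have k0: "real k > 0" using k_pos by simp
  have cLx: "convex_on (edom f) Lx"
  proof -
    have cvf: "convex (edom f)" using cf convex_on_def by blast
    have l: "convex_on (edom f) (\<lambda>v. z \<bullet> (A *v v))"
      by (rule convex_onI[OF _ cvf])
         (simp add: matrix_vector_right_distrib matrix_vector_mult_scaleR inner_add_right)
    have hc: "convex_on (edom f) h" by (rule convex_on_subset[OF h_conv _ cvf]) simp
    show ?thesis unfolding Lx_def
      by (intro convex_on_add cf hc l) (simp add: convex_on_const cvf)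
  qed
  have cLz: "convex_on (edom (conjugate g)) Lz"
  proof -
    have cvg: "convex (edom (conjugate g))" using cg convex_on_def by blast
    have l: "convex_on (edom (conjugate g)) (\<lambda>w. - (w \<bullet> (A *v x)))"
      by (rule convex_onI[OF _ cvg]) (simp add: inner_add_left algebra_simps)
    show ?thesis unfolding Lz_def
      by (intro convex_on_add cg l) (simp add: convex_on_const cvg)
  qed
  have xi: "xk i \<in> edom f" if "i \<in> {1..k}" for i
    using that xf1[of "i - 1"] by (cases i) auto
  have zi: "zk i \<in> edom (conjugate g)" if "i \<in> {1..k}" for i
    using that zg1[of "i - 1"] by (cases i) auto
  define xa where "xa = (1 / real k) *\<^sub>R (\<Sum>i=1..k. xk i)"
  define za where "za = (1 / real k) *\<^sub>R (\<Sum>i=1..k. zk i)"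
  have xa: "xa \<in> edom f" "Lx xa \<le> (1 / real k) * (\<Sum>i=1..k. Lx (xk i))"
    unfolding xa_def using avg_jensen[OF cLx k_pos xi] by auto
  have za: "za \<in> edom (conjugate g)" "Lz za \<le> (1 / real k) * (\<Sum>i=1..k. Lz (zk i))"
    unfolding za_def using avg_jensen[OF cLz k_pos zi] by auto
  define Dp0 where "Dp0 = bdist phip dphip x (xk 0)"
  define Dd0 where "Dd0 = bdist phid dphid z (zk 0)"
  have Dp0: "0 \<le> Dp0" unfolding Dp0_def using dp_strong[OF xD xint[of 0]] zero_le_power2[of "norm (x - xk 0)"]
    by linarith
  have Dd0: "0 \<le> Dd0" unfolding Dd0_def using dd_strong[OF zD zint[of 0]] zero_le_power2[of "Nd (z - zk 0)"]
    by linarith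
  have sumb: "(\<Sum>i=1..k. Lx (xk i)) + (\<Sum>i=1..k. Lz (zk i)) \<le> 2 * (Dp0 / \<tau> + Dd0 / \<sigma>)"
    using tel[of k] Vb[of k] Vb[of 0] unfolding sum.distrib[symmetric] Dp0_def Dd0_def by linarith
  have "Lx xa + Lz za \<le> (1 / real k) * (2 * (Dp0 / \<tau> + Dd0 / \<sigma>))"
  proof -
    have "Lx xa + Lz za \<le> (1 / real k) * ((\<Sum>i=1..k. Lx (xk i)) + (\<Sum>i=1..k. Lz (zk i)))"
      using xa(2) za(2) by (simp add: distrib_left)
    also have "\<dots> \<le> (1 / real k) * (2 * (Dp0 / \<tau> + Dd0 / \<sigma>))"
      by (rule mult_left_mono[OF sumb]) (use k0 in simp)
    finally show ?thesis .
  qed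
  also have "\<dots> \<le> 3 / real k * (2 / \<tau> * Dp0 + 1 / \<sigma> * Dd0)"
  proof -
    have a: "0 \<le> Dp0 / \<tau>" "0 \<le> Dd0 / \<sigma>" using Dp0 Dd0 steps(1,2) by simp_all
    have "2 * (Dp0 / \<tau> + Dd0 / \<sigma>) \<le> 3 * (2 / \<tau> * Dp0 + 1 / \<sigma> * Dd0)" using a by simp
    then have "(1 / real k) * (2 * (Dp0 / \<tau> + Dd0 / \<sigma>)) \<le> (1 / real k) * (3 * (2 / \<tau> * Dp0 + 1 / \<sigma> * Dd0))"
      by (rule mult_left_mono) (use k0 in simp)
    then show ?thesis by simp
  qed
  finally have fin: "Lx xa + Lz za \<le> 3 / real k * (2 / \<tau> * Dp0 + 1 / \<sigma> * Dd0)" .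
  have L1: "lagrangian f h g A xa z = ereal (Lx xa)"
  proof -
    obtain r1 where r1: "f xa = ereal r1" using ffin[OF xa(1)] by blast
    obtain r2 where r2: "conjugate g z = ereal r2" using gfin[OF zg] by blast
    have "lagrangian f h g A xa z = f xa + ereal (h xa + z \<bullet> (A *v xa)) - conjugate g z"
      using xa(1) zg unfolding lagrangian_def by simp
    then show ?thesis unfolding Lx_def r1 r2 by simp
  qed
  have L2: "lagrangian f h g A x za = ereal (- Lz za)"
  proof -
    obtain r1 where r1: "f x = ereal r1" using ffin[OF xf] by blast
    obtain r2 where r2: "conjugate g za = ereal r2" using gfin[OF za(1)] by blast
    have "lagrangian f h g A x za = f x + ereal (h x + za \<bullet> (A *v x)) - conjugate g za"
      using xf za(1) unfolding lagrangian_def by simp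
    then show ?thesis unfolding Lz_def r1 r2 by simp
  qed
  show ?thesis
    unfolding xa_def[symmetric] za_def[symmetric] L1 L2 Dp0_def[symmetric] Dd0_def[symmetric]
    using fin by simp
qed


end
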